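(* Let $S$ be a semigroup or monoid. Then any two loop problems of $S$, taken with respect to finite choices of generators (semigroup choices, or, when $S$ is a monoid, semigroup or monoid choices), are rationally equivalent.
   Context: Maps are written on the right. $X^*$, $X^+$: free monoid and free semigroup on $X$. Let $\overline{X} = \{\overline{x} : x \in X\}$ be new symbols, $\hat{X} = X \cup \overline{X}$. For a monoid $M$ and surjective monoid morphism $\sigma : X^* \to M$, the loop automaton has vertex set $M$, for each $a \in M$, $x \in X$ an edge $a \to a(x\sigma)$ labelled $x$ and an edge $a(x\sigma) \to a$ labelled $\overline{x}$; the loop problem $L_\sigma(M) \subseteq \hat{X}^*$ is the set of labels of paths from the identity to the identity. For a semigroup $S$ (possibly a monoid) and surjective morphism $\sigma : X^+ \to S$, $L_\sigma(S)$ is the loop problem of $S^1$ ($S$ with a new identity adjoined, even if one exists) with respect to the unique extension $X^* \to S^1$. A rational transduction from a finite alphabet $A$ to a finite alphabet $B$ is a relation $\rho \subseteq A^* \times B^*$ accepted by a finite transducer: a finite directed graph with edges labelled in $A^* \times B^*$, an initial vertex and terminal vertices, accepting the componentwise-concatenated labels of initial-to-terminal paths. The image of $L \subseteq A^*$ is $L\rho = \{v : (u,v) \in \rho \text{ for some } u \in L\}$. Two languages are rationally equivalent if each is the image of the other under some rational transduction. *)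

theory Defs
  imports Main
begin

definition is_semigroup :: "'s set \<Rightarrow> ('s \<Rightarrow> 's \<Rightarrow> 's) \<Rightarrow> bool" where
  "is_semigroup S mult \<longleftrightarrow>
     (\<forall>a\<in>S. \<forall>b\<in>S. mult a b \<in> S) \<and>
     (\<forall>a\<in>S. \<forall>b\<in>S. \<forall>c\<in>S. mult (mult a b) c = mult a (mult b c))"

definition is_monoid :: "'s set \<Rightarrow> ('s \<Rightarrow> 's \<Rightarrow> 's) \<Rightarrow> 's \<Rightarrow> bool" where
  "is_monoid M mult e \<longleftrightarrow> is_semigroup M mult \<and> e \<in> M \<and>
     (\<forall>a\<in>M. mult e a = a \<and> mult a e = a)"

definition mon_eval :: "('s \<Rightarrow> 's \<Rightarrow> 's) \<Rightarrow> 's \<Rightarrow> ('x \<Rightarrow> 's) \<Rightarrow> 'x list \<Rightarrow> 's" where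
  "mon_eval mult e g xs = foldl mult e (map g xs)"

definition sg_eval :: "('s \<Rightarrow> 's \<Rightarrow> 's) \<Rightarrow> ('x \<Rightarrow> 's) \<Rightarrow> 'x list \<Rightarrow> 's" where
  "sg_eval mult g xs = foldl mult (g (hd xs)) (map g (tl xs))"

definition monoid_choice :: "'s set \<Rightarrow> ('s \<Rightarrow> 's \<Rightarrow> 's) \<Rightarrow> 's \<Rightarrow> 'x set \<Rightarrow> ('x \<Rightarrow> 's) \<Rightarrow> bool" where
  "monoid_choice M mult e X g \<longleftrightarrow> finite X \<and> g ` X \<subseteq> M \<and>
     (\<forall>m\<in>M. \<exists>xs\<in>lists X. mon_eval mult e g xs = m)"

definition semigroup_choice :: "'s set \<Rightarrow> ('s \<Rightarrow> 's \<Rightarrow> 's) \<Rightarrow> 'x set \<Rightarrow> ('x \<Rightarrow> 's) \<Rightarrow> bool" where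
  "semigroup_choice S mult X g \<longleftrightarrow> finite X \<and> g ` X \<subseteq> S \<and>
     (\<forall>s\<in>S. \<exists>xs\<in>lists X. xs \<noteq> [] \<and> sg_eval mult g xs = s)"

text \<open>The alphabet \<open>X\<^sup>^ = X \<union> X\<^sup>-\<close>: \<open>Inl x\<close> stands for \<open>x\<close>, \<open>Inr x\<close> for \<open>x\<^sup>-\<close>.\<close>
definition hat :: "'x set \<Rightarrow> ('x + 'x) set" where
  "hat X = Inl ` X \<union> Inr ` X"

inductive loop_path :: "'s set \<Rightarrow> ('s \<Rightarrow> 's \<Rightarrow> 's) \<Rightarrow> 'x set \<Rightarrow> ('x \<Rightarrow> 's)
    \<Rightarrow> 's \<Rightarrow> ('x + 'x) list \<Rightarrow> 's \<Rightarrow> bool"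
  for M mult X g where
  nil: "a \<in> M \<Longrightarrow> loop_path M mult X g a [] a"
| fwd: "\<lbrakk>a \<in> M; x \<in> X; loop_path M mult X g (mult a (g x)) w b\<rbrakk>
        \<Longrightarrow> loop_path M mult X g a (Inl x # w) b"
| bwd: "\<lbrakk>a \<in> M; c \<in> M; x \<in> X; mult c (g x) = a; loop_path M mult X g c w b\<rbrakk>
        \<Longrightarrow> loop_path M mult X g a (Inr x # w) b"

definition loop_problem_mon :: "'s set \<Rightarrow> ('s \<Rightarrow> 's \<Rightarrow> 's) \<Rightarrow> 's \<Rightarrow> 'x set \<Rightarrow> ('x \<Rightarrow> 's)
    \<Rightarrow> ('x + 'x) list set" where
  "loop_problem_mon M mult e X g = {w. loop_path M mult X g e w e}"

text \<open>\<open>S\<^sup>1\<close>: \<open>S\<close> with a new identity \<open>None\<close> adjoined.\<close>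
definition adjoin_one :: "'s set \<Rightarrow> 's option set" where
  "adjoin_one S = insert None (Some ` S)"

fun mult_one :: "('s \<Rightarrow> 's \<Rightarrow> 's) \<Rightarrow> 's option \<Rightarrow> 's option \<Rightarrow> 's option" where
  "mult_one mult None b = b"
| "mult_one mult a None = a"
| "mult_one mult (Some a) (Some b) = Some (mult a b)"

definition loop_problem_sg :: "'s set \<Rightarrow> ('s \<Rightarrow> 's \<Rightarrow> 's) \<Rightarrow> 'x set \<Rightarrow> ('x \<Rightarrow> 's)
    \<Rightarrow> ('x + 'x) list set" where
  "loop_problem_sg S mult X g =
     loop_problem_mon (adjoin_one S) (mult_one mult) None X (\<lambda>x. Some (g x))"

definition is_loop_problem :: "'s set \<Rightarrow> ('s \<Rightarrow> 's \<Rightarrow> 's) \<Rightarrow> 'x set \<Rightarrow> ('x + 'x) list set \<Rightarrow> bool" where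
  "is_loop_problem S mult X L \<longleftrightarrow>
     (\<exists>g. semigroup_choice S mult X g \<and> L = loop_problem_sg S mult X g) \<or>
     (\<exists>e g. is_monoid S mult e \<and> monoid_choice S mult e X g \<and> L = loop_problem_mon S mult e X g)"

inductive trans_run :: "(nat \<times> 'a list \<times> 'b list \<times> nat) set \<Rightarrow> nat \<Rightarrow> 'a list \<Rightarrow> 'b list \<Rightarrow> nat \<Rightarrow> bool"
  for E where
  nil: "trans_run E q [] [] q"
| step: "\<lbrakk>(p, u, v, q) \<in> E; trans_run E q u' v' r\<rbrakk> \<Longrightarrow> trans_run E p (u @ u') (v @ v') r"

definition rational_transduction :: "'a set \<Rightarrow> 'b set \<Rightarrow> ('a list \<times> 'b list) set \<Rightarrow> bool" where
  "rational_transduction A B \<rho> \<longleftrightarrow>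
     (\<exists>Q E q0 F. finite Q \<and> finite E \<and> q0 \<in> Q \<and> F \<subseteq> Q \<and>
        E \<subseteq> Q \<times> lists A \<times> lists B \<times> Q \<and>
        \<rho> = {(u, v). \<exists>f\<in>F. trans_run E q0 u v f})"

definition trans_image :: "'a list set \<Rightarrow> ('a list \<times> 'b list) set \<Rightarrow> 'b list set" where
  "trans_image L \<rho> = {v. \<exists>u\<in>L. (u, v) \<in> \<rho>}"

definition rationally_equivalent :: "'a set \<Rightarrow> 'b set \<Rightarrow> 'a list set \<Rightarrow> 'b list set \<Rightarrow> bool" where
  "rationally_equivalent A B L1 L2 \<longleftrightarrow>
     (\<exists>\<rho>. rational_transduction A B \<rho> \<and> L2 = trans_image L1 \<rho>) \<and>
     (\<exists>\<rho>. rational_transduction B A \<rho> \<and> L1 = trans_image L2 \<rho>)"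

end

theory Submission
  imports Defs
begin

section \<open>Basic facts on loop paths\<close>

lemma lp_M: "loop_path M mult X g a w b \<Longrightarrow> a \<in> M \<and> b \<in> M"
  by (induction rule: loop_path.induct) auto

lemma lp_lists: "loop_path M mult X g a w b \<Longrightarrow> w \<in> lists (hat X)"
  by (induction rule: loop_path.induct) (auto simp: hat_def)

lemma hat_Inl[simp]: "Inl y \<in> hat Y \<longleftrightarrow> y \<in> Y" by (auto simp: hat_def)
lemma hat_Inr[simp]: "Inr y \<in> hat Y \<longleftrightarrow> y \<in> Y" by (auto simp: hat_def)
lemma hat_finite: "finite Y \<Longrightarrow> finite (hat Y)" by (simp add: hat_def)

lemma lp_Nil[simp]: "loop_path M mult X g a [] b \<longleftrightarrow> a \<in> M \<and> b = a"
  by (auto elim: loop_path.cases intro: loop_path.intros)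

lemma lp_Inl[simp]: "loop_path M mult X g a (Inl x # w) b \<longleftrightarrow>
   a \<in> M \<and> x \<in> X \<and> loop_path M mult X g (mult a (g x)) w b"
  by (auto elim: loop_path.cases intro: loop_path.intros)

lemma lp_Inr[simp]: "loop_path M mult X g a (Inr x # w) b \<longleftrightarrow>
   a \<in> M \<and> x \<in> X \<and> (\<exists>c\<in>M. mult c (g x) = a \<and> loop_path M mult X g c w b)"
  by (auto elim: loop_path.cases intro: loop_path.intros)

lemma lp_append: "loop_path M mult X g a (u @ v) b \<longleftrightarrow>
   (\<exists>m. loop_path M mult X g a u m \<and> loop_path M mult X g m v b)"
proof (induction u arbitrary: a)
  case Nil then show ?case using lp_M by fastforce
next
  case (Cons l u) then show ?case by (cases l) auto
qed

lemma lp_fwd: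
  assumes cl: "\<forall>a\<in>M. \<forall>x\<in>X. mult a (g x) \<in> M" and "set xs \<subseteq> X" and "a \<in> M"
  shows "loop_path M mult X g a (map Inl xs) b \<longleftrightarrow> b = foldl mult a (map g xs)"
  using assms(2,3)
proof (induction xs arbitrary: a)
  case Nil then show ?case by auto
next
  case (Cons x xs) then show ?case using cl by auto
qed

lemma lp_bwd:
  assumes cl: "\<forall>a\<in>M. \<forall>x\<in>X. mult a (g x) \<in> M" and "set xs \<subseteq> X"
  shows "loop_path M mult X g b (map Inr (rev xs)) c \<longleftrightarrow> c \<in> M \<and> b = foldl mult c (map g xs)"
  using assms(2)
proof (induction xs arbitrary: c)
  case Nil then show ?case by auto
next
  case (Cons x xs)
  have IH: "\<And>m. loop_path M mult X g b (map Inr (rev xs)) m \<longleftrightarrow> m \<in> M \<and> b = foldl mult m (map g xs)"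
    using Cons by auto
  have "loop_path M mult X g b (map Inr (rev (x # xs))) c \<longleftrightarrow>
     (\<exists>m. loop_path M mult X g b (map Inr (rev xs)) m \<and> loop_path M mult X g m [Inr x] c)"
    by (simp add: lp_append)
  also have "\<dots> \<longleftrightarrow> c \<in> M \<and> b = foldl mult (mult c (g x)) (map g xs)"
    using IH Cons.prems cl by auto
  finally show ?case by simp
qed

fun psi :: "('y \<Rightarrow> 'x list) \<Rightarrow> 'y + 'y \<Rightarrow> ('x + 'x) list" where
  "psi h (Inl y) = map Inl (h y)"
| "psi h (Inr y) = map Inr (rev (h y))"

lemma lp_psi:
  assumes clX: "\<forall>a\<in>M. \<forall>x\<in>X. mult a (gX x) \<in> M"
    and clY: "\<forall>a\<in>M. \<forall>y\<in>Y. mult a (gY y) \<in> M"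
    and h: "\<forall>y\<in>Y. set (h y) \<subseteq> X \<and> (\<forall>a\<in>M. foldl mult a (map gX (h y)) = mult a (gY y))"
    and w: "w \<in> lists (hat Y)"
  shows "loop_path M mult X gX a (concat (map (psi h) w)) b \<longleftrightarrow> loop_path M mult Y gY a w b"
  using w
proof (induction w arbitrary: a)
  case Nil then show ?case by simp
next
  case (Cons l w)
  then obtain y where y: "y \<in> Y" "l = Inl y \<or> l = Inr y" by (auto simp: hat_def)
  have IH: "\<And>a. loop_path M mult X gX a (concat (map (psi h) w)) b \<longleftrightarrow> loop_path M mult Y gY a w b"
    using Cons by auto
  show ?case
  proof (cases "l = Inl y")
    case True
    show ?thesis
    proof (cases "a \<in> M")
      case False then show ?thesis using lp_M True by (fastforce simp: lp_append)
    next
      case aM: True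
      have "loop_path M mult X gX a (concat (map (psi h) (l # w))) b \<longleftrightarrow>
        (\<exists>m. loop_path M mult X gX a (map Inl (h y)) m \<and> loop_path M mult X gX m (concat (map (psi h) w)) b)"
        using True by (simp add: lp_append)
      also have "\<dots> \<longleftrightarrow> loop_path M mult X gX (mult a (gY y)) (concat (map (psi h) w)) b"
        using lp_fwd[OF clX _ aM] h y aM by auto
      also have "\<dots> \<longleftrightarrow> loop_path M mult Y gY a (l # w) b"
        using IH True aM y by simp
      finally show ?thesis .
    qed
  next
    case False
    then have l: "l = Inr y" using y by auto
    have "loop_path M mult X gX a (concat (map (psi h) (l # w))) b \<longleftrightarrow>
        (\<exists>m. loop_path M mult X gX a (map Inr (rev (h y))) m \<and> loop_path M mult X gX m (concat (map (psi h) w)) b)"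
      using l by (simp add: lp_append)
    also have "\<dots> \<longleftrightarrow> (\<exists>m\<in>M. a = mult m (gY y) \<and> loop_path M mult X gX m (concat (map (psi h) w)) b)"
      using lp_bwd[OF clX] h y by auto
    also have "\<dots> \<longleftrightarrow> loop_path M mult Y gY a (l # w) b"
      using IH l y clY by auto
    finally show ?thesis .
  qed
qed


section \<open>Letter transducers\<close>

inductive dpath :: "(nat \<times> 'b \<times> nat) set \<Rightarrow> nat \<Rightarrow> 'b list \<Rightarrow> nat \<Rightarrow> bool" for D where
  dnil: "dpath D q [] q"
| dcons: "(q, a, q') \<in> D \<Longrightarrow> dpath D q' w r \<Longrightarrow> dpath D q (a # w) r"

definition letter_edges :: "(nat \<times> 'b \<times> nat) set \<Rightarrow> ('b \<Rightarrow> 'a list) \<Rightarrow> (nat \<times> 'a list \<times> 'b list \<times> nat) set" where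
  "letter_edges D f = (\<lambda>(q,a,q'). (q, f a, [a], q')) ` D"

lemma run_imp: "trans_run (letter_edges D f) q u v r \<Longrightarrow> dpath D q v r \<and> u = concat (map f v)"
  by (induction rule: trans_run.induct) (auto simp: letter_edges_def intro: dpath.intros)

lemma dpath_imp: "dpath D q v r \<Longrightarrow> trans_run (letter_edges D f) q (concat (map f v)) v r"
proof (induction rule: dpath.induct)
  case (dnil q) then show ?case by (simp add: trans_run.nil)
next
  case (dcons q a q' w r)
  have "(q, f a, [a], q') \<in> letter_edges D f" using dcons(1) by (force simp: letter_edges_def)
  from trans_run.step[OF this dcons(3)] show ?case by simp
qed

lemma run_iff: "trans_run (letter_edges D f) q u v r \<longleftrightarrow> dpath D q v r \<and> u = concat (map f v)"
  using run_imp dpath_imp by metis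

lemma rat_from_dpath:
  assumes "finite B" "f ` B \<subseteq> lists A" "D \<subseteq> Q \<times> B \<times> Q" "finite Q" "0 \<in> Q" "F \<subseteq> Q"
    and L2: "L2 = {w. \<exists>r\<in>F. dpath D 0 w r \<and> concat (map f w) \<in> L1}"
  shows "\<exists>\<rho>. rational_transduction A B \<rho> \<and> L2 = trans_image L1 \<rho>"
proof -
  define E where "E = letter_edges D f"
  define \<rho> where "\<rho> = {(u, v). \<exists>r\<in>F. trans_run E 0 u v r}"
  have fD: "finite D" using assms(1,3,4) finite_subset by blast
  have "finite E" using fD by (simp add: E_def letter_edges_def)
  moreover have "E \<subseteq> Q \<times> lists A \<times> lists B \<times> Q"
    using assms(2,3) by (auto simp: E_def letter_edges_def)
  ultimately have "rational_transduction A B \<rho>"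
    unfolding rational_transduction_def \<rho>_def
    apply (rule_tac x=Q in exI, rule_tac x=E in exI, rule_tac x=0 in exI, rule_tac x=F in exI)
    using assms(4,5,6) by simp
  moreover have "L2 = trans_image L1 \<rho>"
    unfolding L2 trans_image_def \<rho>_def E_def run_iff by blast
  ultimately show ?thesis by blast
qed

definition D1 :: "'b set \<Rightarrow> (nat \<times> 'b \<times> nat) set" where
  "D1 B = (\<lambda>a. (0, a, 0)) ` B"

lemma dpath_D1: "dpath (D1 B) q w r \<Longrightarrow> q = 0 \<Longrightarrow> r = 0 \<and> w \<in> lists B"
  by (induction rule: dpath.induct) (auto simp: D1_def)

lemma dpath_D1': "w \<in> lists B \<Longrightarrow> dpath (D1 B) 0 w 0"
proof (induction w)
  case Nil then show ?case by (simp add: dnil)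
next
  case (Cons a w)
  have "(0, a, 0) \<in> D1 B" using Cons(2) by (simp add: D1_def)
  then show ?case using Cons by (simp add: dcons)
qed

lemma rat_inv_hom:
  assumes "finite B" "f ` B \<subseteq> lists A"
    and L2: "L2 = {w\<in>lists B. concat (map f w) \<in> L1}"
  shows "\<exists>\<rho>. rational_transduction A B \<rho> \<and> L2 = trans_image L1 \<rho>"
proof (rule rat_from_dpath[OF assms(1,2), of "D1 B" "{0}" "{0}"])
  show "D1 B \<subseteq> {0} \<times> B \<times> {0}" unfolding D1_def by blast
  show "finite {0::nat}" by simp
  show "(0::nat) \<in> {0}" by simp
  show "{0::nat} \<subseteq> {0}" by simp
  have "\<And>w. (w \<in> lists B \<and> concat (map f w) \<in> L1) \<longleftrightarrow>
     ((\<exists>r\<in>{0}. dpath (D1 B) 0 w r) \<and> concat (map f w) \<in> L1)"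
    by (metis dpath_D1 dpath_D1' singletonD singletonI)
  then show "L2 = {w. \<exists>r\<in>{0}. dpath (D1 B) 0 w r \<and> concat (map f w) \<in> L1}"
    unfolding L2 by auto
qed

definition D2 :: "'y set \<Rightarrow> (nat \<times> ('y + 'y) \<times> nat) set" where
  "D2 Y = (\<lambda>y. (0, Inl y, 1)) ` Y \<union> (\<lambda>a. (1, a, 1)) ` hat Y \<union> (\<lambda>y. (1, Inr y, 2)) ` Y"

lemma D2_mem: "(p, a, q) \<in> D2 Y \<longleftrightarrow>
   (p = 0 \<and> q = 1 \<and> (\<exists>y\<in>Y. a = Inl y)) \<or> (p = 1 \<and> q = 1 \<and> a \<in> hat Y) \<or>
   (p = 1 \<and> q = 2 \<and> (\<exists>y\<in>Y. a = Inr y))"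
  unfolding D2_def by blast

lemma dpath_D2_2: "dpath (D2 Y) q w r \<Longrightarrow> q = 2 \<Longrightarrow> w = [] \<and> r = 2"
proof (induction rule: dpath.induct)
  case (dnil q) then show ?case by simp
next
  case (dcons q a q' w r) then show ?case unfolding D2_mem by simp
qed

lemma dpath_D2_1: "dpath (D2 Y) q w r \<Longrightarrow> q = 1 \<Longrightarrow>
   (r = 1 \<and> w \<in> lists (hat Y)) \<or> (r = 2 \<and> (\<exists>u y'. y' \<in> Y \<and> u \<in> lists (hat Y) \<and> w = u @ [Inr y']))"
proof (induction rule: dpath.induct)
  case (dnil q) then show ?case by simp
next
  case (dcons q a q' w r)
  show ?case
  proof (cases "q' = 2")
    case True
    then have "w = [] \<and> r = 2" using dpath_D2_2 dcons(2) by blast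
    moreover obtain y where "y \<in> Y" "a = Inr y" using dcons(1,4) True unfolding D2_mem by auto
    ultimately show ?thesis by (intro disjI2) (rule conjI, simp, rule exI[of _ "[]"], auto)
  next
    case False
    then have q': "q' = 1" and aY: "a \<in> hat Y" using dcons(1,4) unfolding D2_mem by auto
    from dcons(3)[OF q'] show ?thesis
    proof
      assume "r = 1 \<and> w \<in> lists (hat Y)" then show ?thesis using aY by simp
    next
      assume "r = 2 \<and> (\<exists>u y'. y' \<in> Y \<and> u \<in> lists (hat Y) \<and> w = u @ [Inr y'])"
      then obtain u y' where "r = 2" "y' \<in> Y" "u \<in> lists (hat Y)" "w = u @ [Inr y']" by blast
      then show ?thesis using aY by (intro disjI2) (rule conjI, simp, rule exI[of _ "a # u"], auto)
    qed
  qed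
qed

lemma dpath_D2_1': "u \<in> lists (hat Y) \<Longrightarrow> dpath (D2 Y) 1 u 1"
proof (induction u)
  case Nil then show ?case by (simp add: dnil)
next
  case (Cons a u)
  have "(1, a, 1) \<in> D2 Y" using Cons(2) unfolding D2_mem by simp
  then show ?case using Cons by (auto intro: dcons)
qed

lemma dpath_D2_12: "u \<in> lists (hat Y) \<Longrightarrow> y' \<in> Y \<Longrightarrow> dpath (D2 Y) 1 (u @ [Inr y']) 2"
proof (induction u)
  case Nil
  have "(1, Inr y', 2) \<in> D2 Y" using Nil(2) unfolding D2_mem by simp
  then show ?case by (auto intro: dcons dnil)
next
  case (Cons a u)
  have "(1, a, 1) \<in> D2 Y" using Cons(2) unfolding D2_mem by simp
  then show ?case using Cons by (auto intro: dcons)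
qed

definition shape :: "'y set \<Rightarrow> ('y + 'y) list \<Rightarrow> bool" where
  "shape Y w \<longleftrightarrow> w = [] \<or> (\<exists>y\<in>Y. \<exists>y'\<in>Y. \<exists>u\<in>lists (hat Y). w = Inl y # u @ [Inr y'])"

lemma dpath_D2: "(\<exists>r\<in>{0,2}. dpath (D2 Y) 0 w r) \<longleftrightarrow> w \<in> lists (hat Y) \<and> shape Y w"
proof
  assume "\<exists>r\<in>{0,2}. dpath (D2 Y) 0 w r"
  then obtain r where r: "r \<in> {0,2}" "dpath (D2 Y) 0 w r" by blast
  show "w \<in> lists (hat Y) \<and> shape Y w"
  proof (cases w)
    case Nil then show ?thesis by (simp add: shape_def)
  next
    case (Cons a w')
    with r(2) obtain q' where "(0, a, q') \<in> D2 Y" "dpath (D2 Y) q' w' r"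
      by (auto elim: dpath.cases)
    then obtain y where y: "y \<in> Y" "a = Inl y" "q' = 1" "dpath (D2 Y) 1 w' r" unfolding D2_mem by auto
    from dpath_D2_1[OF y(4)] r(1) obtain u y' where "y' \<in> Y" "u \<in> lists (hat Y)" "w' = u @ [Inr y']"
      by auto
    then show ?thesis using Cons y by (auto simp: shape_def)
  qed
next
  assume "w \<in> lists (hat Y) \<and> shape Y w"
  then show "\<exists>r\<in>{0,2}. dpath (D2 Y) 0 w r"
  proof (cases "w = []")
    case True then show ?thesis by (auto intro: dpath.intros)
  next
    case False
    with \<open>w \<in> lists (hat Y) \<and> shape Y w\<close> obtain y y' u where
      "y \<in> Y" "y' \<in> Y" "u \<in> lists (hat Y)" "w = Inl y # u @ [Inr y']" by (auto simp: shape_def)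
    moreover have "(0, Inl y, 1) \<in> D2 Y" using \<open>y \<in> Y\<close> unfolding D2_mem by simp
    ultimately have "dpath (D2 Y) 0 w 2" using dcons[OF _ dpath_D2_12] by simp
    then show ?thesis by blast
  qed
qed

lemma D2_sub: "D2 Y \<subseteq> {0,1,2} \<times> hat Y \<times> {0,1,2}"
proof
  fix t assume "t \<in> D2 Y"
  then obtain p a q where t: "t = (p, a, q)" "(p, a, q) \<in> D2 Y" by (cases t) auto
  then have "p \<in> {0,1,2} \<and> a \<in> hat Y \<and> q \<in> {0,1,2}" unfolding D2_mem by auto
  then show "t \<in> {0,1,2} \<times> hat Y \<times> {0,1,2}" using t by simp
qed

lemma rat_inv_hom_shape:
  assumes "finite Y" "f ` hat Y \<subseteq> lists A"
    and L2: "L2 = {w\<in>lists (hat Y). shape Y w \<and> concat (map f w) \<in> L1}"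
  shows "\<exists>\<rho>. rational_transduction A (hat Y) \<rho> \<and> L2 = trans_image L1 \<rho>"
proof (rule rat_from_dpath[OF hat_finite[OF assms(1)] assms(2) D2_sub])
  show "finite {0::nat,1,2}" by simp
  show "(0::nat) \<in> {0,1,2}" by simp
  show "{0::nat,2} \<subseteq> {0,1,2}" by auto
  have "\<And>w. (w \<in> lists (hat Y) \<and> shape Y w \<and> concat (map f w) \<in> L1) \<longleftrightarrow>
     ((\<exists>r\<in>{0,2}. dpath (D2 Y) 0 w r) \<and> concat (map f w) \<in> L1)"
    using dpath_D2[of Y] by blast
  then show "L2 = {w. \<exists>r\<in>{0,2}. dpath (D2 Y) 0 w r \<and> concat (map f w) \<in> L1}"
    unfolding L2 by auto
qed


lemma sg_cl:
  assumes "is_semigroup S mult" "g ` X \<subseteq> S"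
  shows "\<forall>a\<in>S. \<forall>x\<in>X. mult a (g x) \<in> S"
  using assms by (auto simp: is_semigroup_def)

lemma sg_foldl_closed:
  assumes "is_semigroup S mult" "g ` X \<subseteq> S"
  shows "a \<in> S \<Longrightarrow> set xs \<subseteq> X \<Longrightarrow> foldl mult a (map g xs) \<in> S"
proof (induction xs arbitrary: a)
  case Nil then show ?case by simp
next
  case (Cons x xs) then show ?case using sg_cl[OF assms] by simp
qed

lemma sg_foldl_assoc:
  assumes sg: "is_semigroup S mult" and g: "g ` X \<subseteq> S"
  shows "a \<in> S \<Longrightarrow> b \<in> S \<Longrightarrow> set xs \<subseteq> X \<Longrightarrow>
     foldl mult (mult a b) (map g xs) = mult a (foldl mult b (map g xs))"
proof (induction xs arbitrary: b)
  case Nil then show ?case by simp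
next
  case (Cons x xs)
  have gx: "g x \<in> S" using Cons g by auto
  have "mult (mult a b) (g x) = mult a (mult b (g x))"
    using sg Cons gx by (simp add: is_semigroup_def)
  moreover have "mult b (g x) \<in> S" using sg Cons gx by (simp add: is_semigroup_def)
  ultimately show ?case using Cons by simp
qed

lemma sg_h:
  assumes sg: "is_semigroup S mult" and g: "g ` X \<subseteq> S"
    and "xs \<noteq> []" "set xs \<subseteq> X" "a \<in> S"
  shows "foldl mult a (map g xs) = mult a (sg_eval mult g xs)"
proof (cases xs)
  case Nil then show ?thesis using assms by simp
next
  case (Cons x xs')
  then have "g x \<in> S" using assms by auto
  then show ?thesis using Cons assms sg_foldl_assoc[OF sg g, of a "g x" xs'] by (simp add: sg_eval_def)
qed

lemma mon_h:
  assumes m: "is_monoid S mult e" and g: "g ` X \<subseteq> S"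
    and "set xs \<subseteq> X" "a \<in> S"
  shows "foldl mult a (map g xs) = mult a (mon_eval mult e g xs)"
proof -
  have sg: "is_semigroup S mult" and e: "e \<in> S" "mult a e = a" using m assms by (auto simp: is_monoid_def)
  show ?thesis using sg_foldl_assoc[OF sg g, of a e xs] e assms by (simp add: mon_eval_def)
qed

lemma one_foldl_Some:
  "foldl (mult_one mult) (Some s) (map (\<lambda>x. Some (g x)) xs) = Some (foldl mult s (map g xs))"
  by (induction xs arbitrary: s) auto

lemma one_h:
  assumes sg: "is_semigroup S mult" and g: "g ` X \<subseteq> S"
    and "xs \<noteq> []" "set xs \<subseteq> X" "a \<in> adjoin_one S"
  shows "foldl (mult_one mult) a (map (\<lambda>x. Some (g x)) xs) = mult_one mult a (Some (sg_eval mult g xs))"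
proof (cases a)
  case None
  then show ?thesis using assms(3) one_foldl_Some[of mult] by (cases xs) (auto simp: sg_eval_def)
next
  case (Some s)
  then have "s \<in> S" using assms by (auto simp: adjoin_one_def)
  then show ?thesis using Some one_foldl_Some[of mult s g xs] sg_h[OF sg g assms(3,4) \<open>s \<in> S\<close>] by simp
qed

lemma one_cl:
  assumes "is_semigroup S mult" "g ` X \<subseteq> S"
  shows "\<forall>a\<in>adjoin_one S. \<forall>x\<in>X. mult_one mult a (Some (g x)) \<in> adjoin_one S"
proof (intro ballI)
  fix a x assume a: "a \<in> adjoin_one S" and x: "x \<in> X"
  show "mult_one mult a (Some (g x)) \<in> adjoin_one S"
  proof (cases a)
    case None then show ?thesis using x assms by (auto simp: adjoin_one_def)
  next
    case (Some s) then show ?thesis using a x sg_cl[OF assms] by (auto simp: adjoin_one_def)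
  qed
qed

lemma lp_proj:
  assumes m: "is_monoid S mult e" and g: "g ` X \<subseteq> S"
  shows "loop_path (adjoin_one S) (mult_one mult) X (\<lambda>x. Some (g x)) u w v \<Longrightarrow>
    loop_path S mult X g (case u of None \<Rightarrow> e | Some a \<Rightarrow> a) w (case v of None \<Rightarrow> e | Some a \<Rightarrow> a)"
proof (induction rule: loop_path.induct)
  case (nil a)
  have "e \<in> S" using m by (simp add: is_monoid_def)
  then show ?case using nil by (cases a) (auto simp: adjoin_one_def intro: loop_path.nil)
next
  case (fwd a x w b)
  have pa: "(case a of None \<Rightarrow> e | Some a \<Rightarrow> a) \<in> S" using fwd(1) m by (cases a) (auto simp: adjoin_one_def is_monoid_def)
  have gx: "g x \<in> S" using fwd g by auto
  have "(case mult_one mult a (Some (g x)) of None \<Rightarrow> e | Some a \<Rightarrow> a)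
       = mult (case a of None \<Rightarrow> e | Some a \<Rightarrow> a) (g x)"
    using m gx by (cases a) (auto simp: is_monoid_def)
  then show ?case using fwd pa by (intro loop_path.fwd) auto
next
  case (bwd a c x w b)
  have pa: "(case a of None \<Rightarrow> e | Some a \<Rightarrow> a) \<in> S" using bwd(1) m by (cases a) (auto simp: adjoin_one_def is_monoid_def)
  have pc: "(case c of None \<Rightarrow> e | Some a \<Rightarrow> a) \<in> S" using bwd(2) m by (cases c) (auto simp: adjoin_one_def is_monoid_def)
  have gx: "g x \<in> S" using bwd g by auto
  have "mult (case c of None \<Rightarrow> e | Some a \<Rightarrow> a) (g x) = (case a of None \<Rightarrow> e | Some a \<Rightarrow> a)"
    using m gx bwd(4) by (cases c) (auto simp: is_monoid_def)
  then show ?case using bwd pa pc by (intro loop_path.bwd) auto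
qed

lemma lp_emb:
  "loop_path S mult X g a w b \<Longrightarrow>
   loop_path (adjoin_one S) (mult_one mult) X (\<lambda>x. Some (g x)) (Some a) w (Some b)"
proof (induction rule: loop_path.induct)
  case (nil a) then show ?case by (auto simp: adjoin_one_def intro: loop_path.nil)
next
  case (fwd a x w b) then show ?case by (auto simp: adjoin_one_def)
next
  case (bwd a c x w b) then show ?case by (auto simp: adjoin_one_def)
qed


lemma psi_lists:
  assumes "\<forall>y\<in>Y. set (h y) \<subseteq> X"
  shows "psi h ` hat Y \<subseteq> lists (hat X)"
proof
  fix u assume "u \<in> psi h ` hat Y"
  then obtain a where a: "a \<in> hat Y" "u = psi h a" by blast
  then obtain y where "y \<in> Y" "a = Inl y \<or> a = Inr y" by (auto simp: hat_def)
  moreover have "set (h y) \<subseteq> X" using assms \<open>y \<in> Y\<close> by blast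
  ultimately show "u \<in> lists (hat X)" using a by (cases a) (auto simp: lists_eq_set subset_iff)
qed

lemma generic_case:
  assumes clX: "\<forall>a\<in>M. \<forall>x\<in>X. mult a (gX x) \<in> M"
    and clY: "\<forall>a\<in>M. \<forall>y\<in>Y. mult a (gY y) \<in> M"
    and h: "\<forall>y\<in>Y. set (h y) \<subseteq> X \<and> (\<forall>a\<in>M. foldl mult a (map gX (h y)) = mult a (gY y))"
    and fY: "finite Y"
  shows "\<exists>\<rho>. rational_transduction (hat X) (hat Y) \<rho> \<and>
     {w. loop_path M mult Y gY e w e} = trans_image {w. loop_path M mult X gX e w e} \<rho>"
proof (rule rat_inv_hom[OF hat_finite[OF fY] psi_lists])
  show "\<forall>y\<in>Y. set (h y) \<subseteq> X" using h by blast
  show "{w. loop_path M mult Y gY e w e} =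
    {w \<in> lists (hat Y). concat (map (psi h) w) \<in> {w. loop_path M mult X gX e w e}}"
  proof (rule set_eqI)
    fix w
    show "w \<in> {w. loop_path M mult Y gY e w e} \<longleftrightarrow>
      w \<in> {w \<in> lists (hat Y). concat (map (psi h) w) \<in> {w. loop_path M mult X gX e w e}}"
    proof (cases "w \<in> lists (hat Y)")
      case True
      then show ?thesis using lp_psi[OF clX clY h True, of e e] by simp
    next
      case False
      then show ?thesis using lp_lists[of M mult Y gY e w e] by auto
    qed
  qed
qed

lemma case_sg_sg:
  assumes sg: "is_semigroup S mult"
    and cX: "semigroup_choice S mult X gX" and cY: "semigroup_choice S mult Y gY"
  shows "\<exists>\<rho>. rational_transduction (hat X) (hat Y) \<rho> \<and>
     loop_problem_sg S mult Y gY = trans_image (loop_problem_sg S mult X gX) \<rho>"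
proof -
  have gX: "gX ` X \<subseteq> S" and gY: "gY ` Y \<subseteq> S" and fY: "finite Y"
    using cX cY by (auto simp: semigroup_choice_def)
  have "\<forall>y\<in>Y. \<exists>xs. xs \<in> lists X \<and> xs \<noteq> [] \<and> sg_eval mult gX xs = gY y"
  proof
    fix y assume "y \<in> Y"
    then have "gY y \<in> S" using gY by (simp add: image_subset_iff)
    then obtain xs where "xs \<in> lists X" "xs \<noteq> []" "sg_eval mult gX xs = gY y"
      using cX unfolding semigroup_choice_def by metis
    then show "\<exists>xs. xs \<in> lists X \<and> xs \<noteq> [] \<and> sg_eval mult gX xs = gY y" by blast
  qed
  then obtain h where h: "\<forall>y\<in>Y. h y \<in> lists X \<and> h y \<noteq> [] \<and> sg_eval mult gX (h y) = gY y"
    by (rule bchoice[THEN exE]) blast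
  have h': "\<forall>y\<in>Y. set (h y) \<subseteq> X \<and> (\<forall>a\<in>adjoin_one S.
      foldl (mult_one mult) a (map (\<lambda>x. Some (gX x)) (h y)) = mult_one mult a (Some (gY y)))"
    using h one_h[OF sg gX] by (auto simp: lists_eq_set)
  show ?thesis unfolding loop_problem_sg_def loop_problem_mon_def
    by (rule generic_case[OF one_cl[OF sg gX] one_cl[OF sg gY] h' fY])
qed

lemma case_mon_mon:
  assumes m: "is_monoid S mult e"
    and cX: "monoid_choice S mult e X gX" and cY: "monoid_choice S mult e Y gY"
  shows "\<exists>\<rho>. rational_transduction (hat X) (hat Y) \<rho> \<and>
     loop_problem_mon S mult e Y gY = trans_image (loop_problem_mon S mult e X gX) \<rho>"
proof -
  have sg: "is_semigroup S mult" using m by (simp add: is_monoid_def)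
  have gX: "gX ` X \<subseteq> S" and gY: "gY ` Y \<subseteq> S" and fY: "finite Y"
    using cX cY by (auto simp: monoid_choice_def)
  have "\<forall>y\<in>Y. \<exists>xs. xs \<in> lists X \<and> mon_eval mult e gX xs = gY y"
  proof
    fix y assume "y \<in> Y"
    then have "gY y \<in> S" using gY by (simp add: image_subset_iff)
    then obtain xs where "xs \<in> lists X" "mon_eval mult e gX xs = gY y"
      using cX unfolding monoid_choice_def by metis
    then show "\<exists>xs. xs \<in> lists X \<and> mon_eval mult e gX xs = gY y" by blast
  qed
  then obtain h where h: "\<forall>y\<in>Y. h y \<in> lists X \<and> mon_eval mult e gX (h y) = gY y"
    by (rule bchoice[THEN exE]) blast
  have h': "\<forall>y\<in>Y. set (h y) \<subseteq> X \<and> (\<forall>a\<in>S.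
      foldl mult a (map gX (h y)) = mult a (gY y))"
    using h mon_h[OF m gX] by (auto simp: lists_eq_set)
  show ?thesis unfolding loop_problem_mon_def
    by (rule generic_case[OF sg_cl[OF sg gX] sg_cl[OF sg gY] h' fY])
qed


definition psi2 :: "('y \<Rightarrow> 'x list) \<Rightarrow> 'x list \<Rightarrow> 'y + 'y \<Rightarrow> ('x + 'x) list" where
  "psi2 h p a = map Inl p @ psi h a @ map Inr (rev p)"

lemma c1:
  assumes cl: "\<forall>a\<in>M. \<forall>x\<in>X. mult a (g x) \<in> M" and p: "set p \<subseteq> X"
    and pfix: "\<forall>a\<in>M. foldl mult a (map g p) = a"
  shows "loop_path M mult X g a (map Inl p @ u @ map Inr (rev p)) b \<longleftrightarrow> loop_path M mult X g a u b"
proof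
  assume "loop_path M mult X g a (map Inl p @ u @ map Inr (rev p)) b"
  then obtain m where 1: "loop_path M mult X g a (map Inl p) m"
    and 23: "loop_path M mult X g m (u @ map Inr (rev p)) b"
    using lp_append[of M mult X g a "map Inl p" "u @ map Inr (rev p)" b] by blast
  then obtain m' where 2: "loop_path M mult X g m u m'" and 3: "loop_path M mult X g m' (map Inr (rev p)) b"
    using lp_append[of M mult X g m u "map Inr (rev p)" b] by blast
  have aM: "a \<in> M" using lp_M[OF 1] by (rule conjunct1)
  have "m = foldl mult a (map g p)" using 1 lp_fwd[OF cl p aM] by blast
  then have ma: "m = a" using bspec[OF pfix aM] by (rule trans)
  have bM: "b \<in> M" using lp_M[OF 3] by (rule conjunct2)
  have "m' = foldl mult b (map g p)" using 3 lp_bwd[OF cl p] by blast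
  then have mb: "m' = b" using bspec[OF pfix bM] by (rule trans)
  show "loop_path M mult X g a u b" using 2 unfolding ma mb .
next
  assume u: "loop_path M mult X g a u b"
  have aM: "a \<in> M" and bM: "b \<in> M" using lp_M[OF u] by auto
  have "a = foldl mult a (map g p)" using bspec[OF pfix aM] by (rule sym)
  then have 1: "loop_path M mult X g a (map Inl p) a" using lp_fwd[OF cl p aM] by blast
  have "b = foldl mult b (map g p)" using bspec[OF pfix bM] by (rule sym)
  then have 3: "loop_path M mult X g b (map Inr (rev p)) b" using lp_bwd[OF cl p] bM by blast
  have "loop_path M mult X g a (u @ map Inr (rev p)) b"
    using lp_append[of M mult X g a u "map Inr (rev p)" b] u 3 by blast
  then show "loop_path M mult X g a (map Inl p @ u @ map Inr (rev p)) b"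
    using lp_append[of M mult X g a "map Inl p" "u @ map Inr (rev p)" b] 1 by blast
qed

lemma c2:
  assumes cl: "\<forall>a\<in>M. \<forall>x\<in>X. mult a (g x) \<in> M" and p: "set p \<subseteq> X"
    and pfix: "\<forall>a\<in>M. foldl mult a (map g p) = a"
  shows "loop_path M mult X g a (concat (map (psi2 h p) w)) b \<longleftrightarrow>
         loop_path M mult X g a (concat (map (psi h) w)) b"
proof (induction w arbitrary: a)
  case Nil then show ?case by simp
next
  case (Cons l w)
  have e: "concat (map (psi2 h p) (l # w)) =
     (map Inl p @ psi h l @ map Inr (rev p)) @ concat (map (psi2 h p) w)"
    by (simp add: psi2_def)
  have "loop_path M mult X g a (concat (map (psi2 h p) (l # w))) b \<longleftrightarrow>
    (\<exists>m. loop_path M mult X g a (map Inl p @ psi h l @ map Inr (rev p)) m \<and>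
         loop_path M mult X g m (concat (map (psi2 h p) w)) b)"
    unfolding e by (rule lp_append)
  also have "\<dots> \<longleftrightarrow> (\<exists>m. loop_path M mult X g a (psi h l) m \<and>
         loop_path M mult X g m (concat (map (psi h) w)) b)"
    using c1[OF cl p pfix] Cons by simp
  also have "\<dots> \<longleftrightarrow> loop_path M mult X g a (concat (map (psi h) (l # w))) b"
    by (simp add: lp_append)
  finally show ?case .
qed

lemma c3: "w \<noteq> [] \<Longrightarrow> \<exists>V. concat (map (psi2 h p) w) = map Inl p @ V @ map Inr (rev p)"
proof (induction w)
  case Nil then show ?case by simp
next
  case (Cons l w)
  show ?case
  proof (cases "w = []")
    case True then show ?thesis by (simp add: psi2_def)
  next
    case False
    then obtain V where V: "concat (map (psi2 h p) w) = map Inl p @ V @ map Inr (rev p)" using Cons by blast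
    have "concat (map (psi2 h p) (l # w)) =
      map Inl p @ (psi h l @ map Inr (rev p) @ map Inl p @ V) @ map Inr (rev p)"
      using V by (simp add: psi2_def)
    then show ?thesis by blast
  qed
qed


lemma one_not_None: "mult_one mult c (Some s) \<noteq> None"
  by (cases c) auto

lemma None_in_one: "None \<in> adjoin_one S" by (simp add: adjoin_one_def)
lemma Some_in_one: "s \<in> S \<Longrightarrow> Some s \<in> adjoin_one S" by (simp add: adjoin_one_def)

lemma case_sg_mon:
  assumes m: "is_monoid S mult e"
    and cX: "semigroup_choice S mult X gX" and cY: "monoid_choice S mult e Y gY"
  shows "\<exists>\<rho>. rational_transduction (hat X) (hat Y) \<rho> \<and>
     loop_problem_mon S mult e Y gY = trans_image (loop_problem_sg S mult X gX) \<rho>"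
proof -
  have sg: "is_semigroup S mult" and eS: "e \<in> S" using m by (auto simp: is_monoid_def)
  have eid: "\<And>a. a \<in> S \<Longrightarrow> mult a e = a" using m by (simp add: is_monoid_def)
  have gX: "gX ` X \<subseteq> S" and gY: "gY ` Y \<subseteq> S" and fY: "finite Y"
    using cX cY by (auto simp: semigroup_choice_def monoid_choice_def)
  have "\<forall>y\<in>Y. \<exists>xs. xs \<in> lists X \<and> xs \<noteq> [] \<and> sg_eval mult gX xs = gY y"
  proof
    fix y assume "y \<in> Y"
    then have "gY y \<in> S" using gY by (simp add: image_subset_iff)
    then obtain xs where "xs \<in> lists X" "xs \<noteq> []" "sg_eval mult gX xs = gY y"
      using cX unfolding semigroup_choice_def by metis
    then show "\<exists>xs. xs \<in> lists X \<and> xs \<noteq> [] \<and> sg_eval mult gX xs = gY y" by blast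
  qed
  then obtain h where h: "\<forall>y\<in>Y. h y \<in> lists X \<and> h y \<noteq> [] \<and> sg_eval mult gX (h y) = gY y"
    by (rule bchoice[THEN exE]) blast
  obtain p where p: "p \<in> lists X" "p \<noteq> []" "sg_eval mult gX p = e"
    using cX eS unfolding semigroup_choice_def by metis
  have pX: "set p \<subseteq> X" using p by (simp add: lists_eq_set)
  have hS: "\<forall>y\<in>Y. set (h y) \<subseteq> X \<and> (\<forall>a\<in>S. foldl mult a (map gX (h y)) = mult a (gY y))"
    using h sg_h[OF sg gX] by (auto simp: lists_eq_set)
  have pfixS: "\<forall>a\<in>S. foldl mult a (map gX p) = a"
  proof
    fix a assume a: "a \<in> S"
    have "foldl mult a (map gX p) = mult a (sg_eval mult gX p)" by (rule sg_h[OF sg gX p(2) pX a])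
    then show "foldl mult a (map gX p) = a" using p(3) eid[OF a] by simp
  qed
  note clX = sg_cl[OF sg gX] and clY = sg_cl[OF sg gY]
  note clX1 = one_cl[OF sg gX]
  have key: "loop_path S mult Y gY e w e \<longleftrightarrow>
     loop_path (adjoin_one S) (mult_one mult) X (\<lambda>x. Some (gX x)) None (concat (map (psi2 h p) w)) None"
    if w: "w \<in> lists (hat Y)" for w
  proof -
    let ?W = "concat (map (psi2 h p) w)"
    have AB: "loop_path S mult Y gY e w e \<longleftrightarrow> loop_path S mult X gX e ?W e"
      using lp_psi[OF clX clY hS w, of e e] c2[OF clX pX pfixS, of e h w e] by simp
    have C: "loop_path S mult X gX e ?W e"
      if "loop_path (adjoin_one S) (mult_one mult) X (\<lambda>x. Some (gX x)) None ?W None"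
      using lp_proj[OF m gX that] by simp
    have D: "loop_path (adjoin_one S) (mult_one mult) X (\<lambda>x. Some (gX x)) None ?W None"
      if WS: "loop_path S mult X gX e ?W e"
    proof (cases "w = []")
      case True then show ?thesis by (simp add: None_in_one)
    next
      case False
      then obtain V where V: "?W = map Inl p @ V @ map Inr (rev p)" using c3 by blast
      have "loop_path S mult X gX e V e" using WS unfolding V c1[OF clX pX pfixS] .
      then have 2: "loop_path (adjoin_one S) (mult_one mult) X (\<lambda>x. Some (gX x)) (Some e) V (Some e)"
        by (rule lp_emb)
      have fo: "foldl (mult_one mult) None (map (\<lambda>x. Some (gX x)) p) = Some e"
        using one_h[OF sg gX p(2) pX None_in_one] p(3) by simp
      have 1: "loop_path (adjoin_one S) (mult_one mult) X (\<lambda>x. Some (gX x)) None (map Inl p) (Some e)"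
        using lp_fwd[OF clX1 pX None_in_one] fo by simp
      have 3: "loop_path (adjoin_one S) (mult_one mult) X (\<lambda>x. Some (gX x)) (Some e) (map Inr (rev p)) None"
        using lp_bwd[OF clX1 pX] fo None_in_one by simp
      have "loop_path (adjoin_one S) (mult_one mult) X (\<lambda>x. Some (gX x)) (Some e) (V @ map Inr (rev p)) None"
        using lp_append[of "adjoin_one S" "mult_one mult" X "\<lambda>x. Some (gX x)" "Some e" V "map Inr (rev p)" None] 2 3
        by blast
      then show ?thesis unfolding V
        using lp_append[of "adjoin_one S" "mult_one mult" X "\<lambda>x. Some (gX x)" None "map Inl p" "V @ map Inr (rev p)" None] 1
        by blast
    qed
    show ?thesis using AB C D by blast
  qed
  have fl: "psi2 h p ` hat Y \<subseteq> lists (hat X)"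
  proof
    fix u assume "u \<in> psi2 h p ` hat Y"
    then obtain a where a: "a \<in> hat Y" "u = psi2 h p a" by blast
    have "psi h a \<in> lists (hat X)" using psi_lists[of Y h X] hS a(1) by blast
    moreover have "map Inl p \<in> lists (hat X)" "map Inr (rev p) \<in> lists (hat X)" using pX by (auto simp: subset_iff)
    ultimately show "u \<in> lists (hat X)" using a(2) by (simp add: psi2_def)
  qed
  show ?thesis
  proof (rule rat_inv_hom[OF hat_finite[OF fY] fl])
    show "loop_problem_mon S mult e Y gY =
      {w \<in> lists (hat Y). concat (map (psi2 h p) w) \<in> loop_problem_sg S mult X gX}"
    proof (rule set_eqI)
      fix w
      show "w \<in> loop_problem_mon S mult e Y gY \<longleftrightarrow>
        w \<in> {w \<in> lists (hat Y). concat (map (psi2 h p) w) \<in> loop_problem_sg S mult X gX}"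
      proof (cases "w \<in> lists (hat Y)")
        case True
        then show ?thesis using key[OF True]
          by (simp add: loop_problem_mon_def loop_problem_sg_def)
      next
        case False
        then show ?thesis using lp_lists[of S mult Y gY e w e] by (auto simp: loop_problem_mon_def)
      qed
    qed
  qed
qed


lemma d_key:
  assumes m: "is_monoid S mult e" and g: "gY ` Y \<subseteq> S" and w: "w \<in> lists (hat Y)"
  shows "loop_path (adjoin_one S) (mult_one mult) Y (\<lambda>y. Some (gY y)) None w None \<longleftrightarrow>
     shape Y w \<and> loop_path S mult Y gY e w e"
proof
  assume L: "loop_path (adjoin_one S) (mult_one mult) Y (\<lambda>y. Some (gY y)) None w None"
  have Pe: "loop_path S mult Y gY e w e" using lp_proj[OF m g L] by simp
  have "shape Y w"
  proof (cases w)
    case Nil then show ?thesis by (simp add: shape_def)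
  next
    case (Cons l w')
    have "\<not> (\<exists>y. l = Inr y)"
    proof
      assume "\<exists>y. l = Inr y"
      then obtain y where "l = Inr y" by blast
      then show False using L Cons one_not_None[of mult] by auto
    qed
    then obtain y where ly: "l = Inl y" by (cases l) auto
    have yY: "y \<in> Y" using w Cons ly by simp
    have L': "loop_path (adjoin_one S) (mult_one mult) Y (\<lambda>y. Some (gY y)) (Some (gY y)) w' None"
      using L Cons ly by simp
    have "w' \<noteq> []" using L' by auto
    then obtain u l' where wu: "w' = u @ [l']" by (metis rev_exhaust)
    then obtain mm where "loop_path (adjoin_one S) (mult_one mult) Y (\<lambda>y. Some (gY y)) mm [l'] None"
      using L' lp_append[of "adjoin_one S" "mult_one mult" Y "\<lambda>y. Some (gY y)" "Some (gY y)" u "[l']" None]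
      by blast
    moreover have nn: "\<And>c s. None \<noteq> mult_one mult c (Some s)" using one_not_None by metis
    ultimately obtain y' where l': "l' = Inr y'" by (cases l') auto
    have "y' \<in> Y" "u \<in> lists (hat Y)" using w Cons wu l' by auto
    then show ?thesis unfolding shape_def using Cons ly wu l' yY by blast
  qed
  then show "shape Y w \<and> loop_path S mult Y gY e w e" using Pe by blast
next
  assume R: "shape Y w \<and> loop_path S mult Y gY e w e"
  show "loop_path (adjoin_one S) (mult_one mult) Y (\<lambda>y. Some (gY y)) None w None"
  proof (cases "w = []")
    case True then show ?thesis by (simp add: None_in_one)
  next
    case False
    then obtain y y' u where yY: "y \<in> Y" "y' \<in> Y" and wu: "w = Inl y # u @ [Inr y']"
      using R unfolding shape_def by blast
    have eS: "e \<in> S" and eid: "\<And>a. a \<in> S \<Longrightarrow> mult e a = a" using m by (auto simp: is_monoid_def)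
    have gy: "gY y \<in> S" "gY y' \<in> S" using g yY by auto
    have P: "loop_path S mult Y gY (gY y) (u @ [Inr y']) e" using R wu eid[OF gy(1)] by simp
    then obtain mm where 1: "loop_path S mult Y gY (gY y) u mm" and 2: "loop_path S mult Y gY mm [Inr y'] e"
      using lp_append[of S mult Y gY "gY y" u "[Inr y']" e] by blast
    have "mm = gY y'" using 2 eid[OF gy(2)] by auto
    then have P1: "loop_path (adjoin_one S) (mult_one mult) Y (\<lambda>y. Some (gY y)) (Some (gY y)) u (Some (gY y'))"
      using lp_emb[OF 1] by simp
    have P2: "loop_path (adjoin_one S) (mult_one mult) Y (\<lambda>y. Some (gY y)) (Some (gY y')) [Inr y'] None"
    proof (rule loop_path.bwd)
      show "Some (gY y') \<in> adjoin_one S" using gy(2) by (rule Some_in_one)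
      show "None \<in> adjoin_one S" by (rule None_in_one)
      show "y' \<in> Y" by (rule yY(2))
      show "mult_one mult None (Some (gY y')) = Some (gY y')" by simp
      show "loop_path (adjoin_one S) (mult_one mult) Y (\<lambda>y. Some (gY y)) None [] None"
        by (rule loop_path.nil, rule None_in_one)
    qed
    have "loop_path (adjoin_one S) (mult_one mult) Y (\<lambda>y. Some (gY y)) (Some (gY y)) (u @ [Inr y']) None"
      using lp_append[of "adjoin_one S" "mult_one mult" Y "\<lambda>y. Some (gY y)" "Some (gY y)" u "[Inr y']" None] P1 P2
      by blast
    then show ?thesis unfolding wu using yY by (simp add: None_in_one)
  qed
qed

lemma case_mon_sg:
  assumes m: "is_monoid S mult e"
    and cX: "monoid_choice S mult e X gX" and cY: "semigroup_choice S mult Y gY"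
  shows "\<exists>\<rho>. rational_transduction (hat X) (hat Y) \<rho> \<and>
     loop_problem_sg S mult Y gY = trans_image (loop_problem_mon S mult e X gX) \<rho>"
proof -
  have sg: "is_semigroup S mult" using m by (simp add: is_monoid_def)
  have gX: "gX ` X \<subseteq> S" and gY: "gY ` Y \<subseteq> S" and fY: "finite Y"
    using cX cY by (auto simp: monoid_choice_def semigroup_choice_def)
  have "\<forall>y\<in>Y. \<exists>xs. xs \<in> lists X \<and> mon_eval mult e gX xs = gY y"
  proof
    fix y assume "y \<in> Y"
    then have "gY y \<in> S" using gY by (simp add: image_subset_iff)
    then obtain xs where "xs \<in> lists X" "mon_eval mult e gX xs = gY y"
      using cX unfolding monoid_choice_def by metis
    then show "\<exists>xs. xs \<in> lists X \<and> mon_eval mult e gX xs = gY y" by blast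
  qed
  then obtain h where h: "\<forall>y\<in>Y. h y \<in> lists X \<and> mon_eval mult e gX (h y) = gY y"
    by (rule bchoice[THEN exE]) blast
  have hS: "\<forall>y\<in>Y. set (h y) \<subseteq> X \<and> (\<forall>a\<in>S. foldl mult a (map gX (h y)) = mult a (gY y))"
    using h mon_h[OF m gX] by (auto simp: lists_eq_set)
  note clX = sg_cl[OF sg gX] and clY = sg_cl[OF sg gY]
  show ?thesis
  proof (rule rat_inv_hom_shape[OF fY psi_lists])
    show "\<forall>y\<in>Y. set (h y) \<subseteq> X" using hS by blast
    show "loop_problem_sg S mult Y gY =
      {w \<in> lists (hat Y). shape Y w \<and> concat (map (psi h) w) \<in> loop_problem_mon S mult e X gX}"
    proof (rule set_eqI)
      fix w
      show "w \<in> loop_problem_sg S mult Y gY \<longleftrightarrow>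
        w \<in> {w \<in> lists (hat Y). shape Y w \<and> concat (map (psi h) w) \<in> loop_problem_mon S mult e X gX}"
      proof (cases "w \<in> lists (hat Y)")
        case True
        then show ?thesis using d_key[OF m gY True] lp_psi[OF clX clY hS True, of e e]
          by (simp add: loop_problem_mon_def loop_problem_sg_def)
      next
        case False
        then show ?thesis
          using lp_lists[of "adjoin_one S" "mult_one mult" Y "\<lambda>y. Some (gY y)" None w None]
          by (auto simp: loop_problem_mon_def loop_problem_sg_def)
      qed
    qed
  qed
qed

lemma monoid_unique: "is_monoid S mult e \<Longrightarrow> is_monoid S mult e' \<Longrightarrow> e = e'"
  unfolding is_monoid_def by metis

lemma one_dir:
  assumes sg: "is_semigroup S mult"
    and L1: "is_loop_problem S mult X L1"
    and L2: "is_loop_problem S mult Y L2"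
  shows "\<exists>\<rho>. rational_transduction (hat X) (hat Y) \<rho> \<and> L2 = trans_image L1 \<rho>"
proof -
  from L1 consider
    (s) gX where "semigroup_choice S mult X gX" "L1 = loop_problem_sg S mult X gX"
  | (m) e gX where "is_monoid S mult e" "monoid_choice S mult e X gX" "L1 = loop_problem_mon S mult e X gX"
    unfolding is_loop_problem_def by blast
  then show ?thesis
  proof cases
    case s
    from L2 consider
      (s2) gY where "semigroup_choice S mult Y gY" "L2 = loop_problem_sg S mult Y gY"
    | (m2) e' gY where "is_monoid S mult e'" "monoid_choice S mult e' Y gY" "L2 = loop_problem_mon S mult e' Y gY"
      unfolding is_loop_problem_def by blast
    then show ?thesis
    proof cases
      case s2 then show ?thesis using case_sg_sg[OF sg s(1) s2(1)] s(2) by simp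
    next
      case m2 then show ?thesis using case_sg_mon[OF m2(1) s(1) m2(2)] s(2) by simp
    qed
  next
    case m
    from L2 consider
      (s2) gY where "semigroup_choice S mult Y gY" "L2 = loop_problem_sg S mult Y gY"
    | (m2) e' gY where "is_monoid S mult e'" "monoid_choice S mult e' Y gY" "L2 = loop_problem_mon S mult e' Y gY"
      unfolding is_loop_problem_def by blast
    then show ?thesis
    proof cases
      case s2 then show ?thesis using case_mon_sg[OF m(1) m(2) s2(1)] m(3) by simp
    next
      case m2
      have "e' = e" using monoid_unique[OF m2(1) m(1)] .
      then show ?thesis using case_mon_mon[OF m(1) m(2)] m2 m(3) by simp
    qed
  qed
qed

theorem corollary4p8:
  fixes S :: "'s set" and mult :: "'s \<Rightarrow> 's \<Rightarrow> 's"
    and X :: "'x set" and Y :: "'y set"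
    and L1 :: "('x + 'x) list set" and L2 :: "('y + 'y) list set"
  assumes "is_semigroup S mult"
    and "is_loop_problem S mult X L1"
    and "is_loop_problem S mult Y L2"
  shows "rationally_equivalent (hat X) (hat Y) L1 L2"
  unfolding rationally_equivalent_def
  using one_dir[OF assms(1,2,3)] one_dir[OF assms(1,3,2)] by blast

end
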